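(* Let $T$ be a decomposition tree of a distance-hereditary graph $G$, and let $v$ be an internal node of $T$ labeled $\oplus$ with left child $v_l$ and right child $v_r$, such that property (P) holds at $v_l$ and at $v_r$. Assume that $\hat\alpha(v_r)\le\hat\beta(v_l)$, and that neither ($\hat\alpha(v_l)=\hat\beta(v_r)=0$) nor ($\hat\alpha(v_r)=\hat\beta(v_l)=0$) holds. Then $\hat{min}(v)=\hat{min}(v_l)+\hat{min}(v_r)$.
   Context: All graphs are finite, simple, undirected. For a graph $H$ and $S\subseteq V(H)$, $N_H[S]$ is $S$ together with all vertices adjacent to a vertex of $S$, and $H[S]$ is the induced subgraph. Graphs carry a "twin set": a single-vertex graph on $x$ has twin set $\{x\}$. For vertex-disjoint graphs $G_l,G_r$ with twin sets $TS(G_l),TS(G_r)$: the true twin operation $G_l\otimes G_r$ has vertex set $V(G_l)\cup V(G_r)$, edge set $E(G_l)\cup E(G_r)\cup\{uw: u\in TS(G_l), w\in TS(G_r)\}$ and twin set $TS(G_l)\cup TS(G_r)$; the false twin operation $G_l\odot G_r$ has vertex set $V(G_l)\cup V(G_r)$, edge set $E(G_l)\cup E(G_r)$, twin set $TS(G_l)\cup TS(G_r)$; the attachment operation $G_l\oplus G_r$ has the same vertex and edge sets as $G_l\otimes G_r$ and twin set $TS(G_l)$. A decomposition tree $T$ of $G$ is a rooted binary tree whose leaves are in bijection with $V(G)$, each internal node having a left and a right child and a label in $\{\otimes,\odot,\oplus\}$; for each node $v$ define $\hat G(v)$ and $\hat{TS}(v)$ recursively: for a leaf $x$, the single-vertex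 graph on $x$ with twin set $\{x\}$; for an internal node $v$ with label $\circ$ and children $v_l,v_r$, $\hat G(v)=\hat G(v_l)\circ\hat G(v_r)$ with the corresponding twin set; one requires $\hat G(\text{root})=G$. Then $\hat G(v)$ is the subgraph of $G$ induced by the set $\hat V(v)$ of leaves below $v$. For a node $u$ and $0\le k\le|\hat{TS}(u)|$, call $S\subseteq\hat V(u)$ $k$-feasible if $\hat V(u)\setminus\hat{TS}(u)\subseteq N_{\hat G(u)}[S]$ and there is $X\subseteq S\cap\hat{TS}(u)$ with $|X|=k$ such that $\hat G(u)[S\setminus X]$ has a perfect matching. $\hat\gamma_k(u)$ is the minimum size of a $k$-feasible set. $\hat{min}(u)=\min\{\hat\gamma_k(u):0\le k\le|\hat{TS}(u)|\}$, and $\hat\alpha(u)$, $\hat\beta(u)$ are the smallest and the largest $k$ with $\hat\gamma_k(u)=\hat{min}(u)$. Property (P) holds at $u$ if for every $0\le k\le|\hat{TS}(u)|$: $\hat\gamma_k(u)=\hat{min}(u)+\hat\alpha(u)-k$ when $k\le\hat\alpha(u)$; $\hat\gamma_k(u)=\hat{min}(u)+k-\hat\beta(u)$ when $k\ge\hat\beta(u)$; $\hat\gamma_k(u)=\hat{min}(u)$ when $\hat\alpha(u)<k<\hat\beta(u)$ and $k-\hat\alpha(u)$ is even; and $\hat\gamma_k(u)=\hat{min}(u)+1$ otherwise. *)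

theory Defs
  imports Main
begin

definition simple_graph :: "'a set \<Rightarrow> 'a set set \<Rightarrow> bool" where
  "simple_graph V E \<longleftrightarrow> finite V \<and> (\<forall>e\<in>E. e \<subseteq> V \<and> card e = 2)"

definition walk :: "'a set \<Rightarrow> 'a set set \<Rightarrow> 'a list \<Rightarrow> bool" where
  "walk V E p \<longleftrightarrow> p \<noteq> [] \<and> set p \<subseteq> V \<and>
     (\<forall>i. Suc i < length p \<longrightarrow> {p ! i, p ! Suc i} \<in> E)"

definition connected_graph :: "'a set \<Rightarrow> 'a set set \<Rightarrow> bool" where
  "connected_graph V E \<longleftrightarrow>
     (\<forall>u\<in>V. \<forall>w\<in>V. \<exists>p. walk V E p \<and> hd p = u \<and> last p = w)"

definition gdist :: "'a set \<Rightarrow> 'a set set \<Rightarrow> 'a \<Rightarrow> 'a \<Rightarrow> nat" where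
  "gdist V E u w = (LEAST n. \<exists>p. walk V E p \<and> hd p = u \<and> last p = w \<and> length p = Suc n)"

definition induced_edges :: "'a set set \<Rightarrow> 'a set \<Rightarrow> 'a set set" where
  "induced_edges E S = {e \<in> E. e \<subseteq> S}"

definition distance_hereditary :: "'a set \<Rightarrow> 'a set set \<Rightarrow> bool" where
  "distance_hereditary V E \<longleftrightarrow> simple_graph V E \<and>
     (\<forall>S\<subseteq>V. connected_graph S (induced_edges E S) \<longrightarrow>
        (\<forall>u\<in>S. \<forall>w\<in>S. gdist S (induced_edges E S) u w = gdist V E u w))"

definition closed_nbh :: "'a set set \<Rightarrow> 'a set \<Rightarrow> 'a set" where
  "closed_nbh E S = S \<union> {w. \<exists>u\<in>S. {u, w} \<in> E}"

definition perfect_matching :: "'a set set \<Rightarrow> 'a set \<Rightarrow> 'a set set \<Rightarrow> bool" where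
  "perfect_matching E W M \<longleftrightarrow> M \<subseteq> E \<and> (\<forall>e\<in>M. e \<subseteq> W) \<and>
     (\<forall>e\<in>M. \<forall>e'\<in>M. e \<noteq> e' \<longrightarrow> e \<inter> e' = {}) \<and> \<Union>M = W"

datatype op = TrueTwin | FalseTwin | Attach

datatype 'a dtree = Leaf 'a | Node op "'a dtree" "'a dtree"

fun hatV :: "'a dtree \<Rightarrow> 'a set" where
  "hatV (Leaf x) = {x}"
| "hatV (Node _ l r) = hatV l \<union> hatV r"

fun hatTS :: "'a dtree \<Rightarrow> 'a set" where
  "hatTS (Leaf x) = {x}"
| "hatTS (Node TrueTwin l r) = hatTS l \<union> hatTS r"
| "hatTS (Node FalseTwin l r) = hatTS l \<union> hatTS r"
| "hatTS (Node Attach l r) = hatTS l"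

fun hatE :: "'a dtree \<Rightarrow> 'a set set" where
  "hatE (Leaf x) = {}"
| "hatE (Node TrueTwin l r) =
     hatE l \<union> hatE r \<union> {{u, w} | u w. u \<in> hatTS l \<and> w \<in> hatTS r}"
| "hatE (Node FalseTwin l r) = hatE l \<union> hatE r"
| "hatE (Node Attach l r) =
     hatE l \<union> hatE r \<union> {{u, w} | u w. u \<in> hatTS l \<and> w \<in> hatTS r}"

text \<open>Leaves are in bijection with the vertices: children have disjoint leaf sets.\<close>
fun wf_dtree :: "'a dtree \<Rightarrow> bool" where
  "wf_dtree (Leaf x) = True"
| "wf_dtree (Node _ l r) = (wf_dtree l \<and> wf_dtree r \<and> hatV l \<inter> hatV r = {})"

definition decomposition_tree :: "'a dtree \<Rightarrow> 'a set \<Rightarrow> 'a set set \<Rightarrow> bool" where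
  "decomposition_tree T V E \<longleftrightarrow> wf_dtree T \<and> hatV T = V \<and> hatE T = E"

fun subtrees :: "'a dtree \<Rightarrow> 'a dtree set" where
  "subtrees (Leaf x) = {Leaf x}"
| "subtrees (Node c l r) = insert (Node c l r) (subtrees l \<union> subtrees r)"

definition k_feasible :: "'a dtree \<Rightarrow> nat \<Rightarrow> 'a set \<Rightarrow> bool" where
  "k_feasible u k S \<longleftrightarrow> S \<subseteq> hatV u \<and>
     hatV u - hatTS u \<subseteq> closed_nbh (hatE u) S \<and>
     (\<exists>X. X \<subseteq> S \<inter> hatTS u \<and> card X = k \<and>
        (\<exists>M. perfect_matching (hatE u) (S - X) M))"

definition gamma_hat :: "'a dtree \<Rightarrow> nat \<Rightarrow> nat" where
  "gamma_hat u k = (LEAST n. \<exists>S. k_feasible u k S \<and> card S = n)"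

definition min_hat :: "'a dtree \<Rightarrow> nat" where
  "min_hat u = Min {gamma_hat u k | k. k \<le> card (hatTS u)}"

definition alpha_hat :: "'a dtree \<Rightarrow> nat" where
  "alpha_hat u = Min {k. k \<le> card (hatTS u) \<and> gamma_hat u k = min_hat u}"

definition beta_hat :: "'a dtree \<Rightarrow> nat" where
  "beta_hat u = Max {k. k \<le> card (hatTS u) \<and> gamma_hat u k = min_hat u}"

definition property_P :: "'a dtree \<Rightarrow> bool" where
  "property_P u \<longleftrightarrow> (\<forall>k \<le> card (hatTS u).
     (k \<le> alpha_hat u \<longrightarrow> gamma_hat u k = min_hat u + alpha_hat u - k) \<and>
     (beta_hat u \<le> k \<longrightarrow> gamma_hat u k = min_hat u + k - beta_hat u) \<and>
     (alpha_hat u < k \<and> k < beta_hat u \<longrightarrow>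
        gamma_hat u k = (if even (k - alpha_hat u) then min_hat u else min_hat u + 1)))"

end

theory Submission
  imports Defs
begin

lemma finite_hatV: "finite (hatV u)"
  by (induction u) auto

lemma TS_sub: "hatTS u \<subseteq> hatV u"
  by (induction u rule: hatTS.induct) auto

lemma TS_ne: "hatTS u \<noteq> {}"
  by (induction u rule: hatTS.induct) auto

lemma finite_TS: "finite (hatTS u)"
  using finite_subset[OF TS_sub finite_hatV] .

lemma TS_subD: assumes "x \<in> hatTS u" shows "x \<in> hatV u"
  using subsetD[OF TS_sub assms] .

lemma E_sub: "e \<in> hatE u \<Longrightarrow> e \<subseteq> hatV u"
  by (induction u arbitrary: e rule: hatE.induct) (auto intro: TS_subD)

lemma E_ne: "e \<in> hatE u \<Longrightarrow> e \<noteq> {}"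
  by (induction u arbitrary: e rule: hatE.induct) auto

lemma wf_subtrees: "t \<in> subtrees T \<Longrightarrow> wf_dtree T \<Longrightarrow> wf_dtree t"
  by (induction T rule: subtrees.induct) auto

lemma nbh_mono: "E \<subseteq> E' \<Longrightarrow> S \<subseteq> S' \<Longrightarrow> closed_nbh E S \<subseteq> closed_nbh E' S'"
  unfolding closed_nbh_def by blast

lemma feasible_le: "k_feasible u k S \<Longrightarrow> k \<le> card (hatTS u)"
proof -
  assume "k_feasible u k S"
  then obtain X where "X \<subseteq> S \<inter> hatTS u" "card X = k" unfolding k_feasible_def by blast
  then show ?thesis using card_mono[OF finite_TS, of X u] by simp
qed

lemma pm_empty: "perfect_matching E {} {}"
  unfolding perfect_matching_def by simp

lemma twin_combine:
  assumes TS: "hatTS u = hatTS l \<union> hatTS r" and V: "hatV u = hatV l \<union> hatV r"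
    and E: "hatE l \<union> hatE r \<subseteq> hatE u" and D: "hatV l \<inter> hatV r = {}"
    and F1: "k_feasible l k1 S1" and F2: "k_feasible r k2 S2"
  shows "k_feasible u (k1+k2) (S1 \<union> S2)"
proof -
  obtain X1 M1 where X1: "X1 \<subseteq> S1 \<inter> hatTS l" "card X1 = k1" "perfect_matching (hatE l) (S1 - X1) M1"
    and S1: "S1 \<subseteq> hatV l" "hatV l - hatTS l \<subseteq> closed_nbh (hatE l) S1"
    using F1 unfolding k_feasible_def by blast
  obtain X2 M2 where X2: "X2 \<subseteq> S2 \<inter> hatTS r" "card X2 = k2" "perfect_matching (hatE r) (S2 - X2) M2"
    and S2: "S2 \<subseteq> hatV r" "hatV r - hatTS r \<subseteq> closed_nbh (hatE r) S2"
    using F2 unfolding k_feasible_def by blast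
  have M1: "M1 \<subseteq> hatE l" "\<forall>e\<in>M1. e \<subseteq> S1 - X1" "\<forall>e\<in>M1. \<forall>e'\<in>M1. e \<noteq> e' \<longrightarrow> e \<inter> e' = {}" "\<Union>M1 = S1 - X1"
    using X1(3) unfolding perfect_matching_def by auto
  have M2: "M2 \<subseteq> hatE r" "\<forall>e\<in>M2. e \<subseteq> S2 - X2" "\<forall>e\<in>M2. \<forall>e'\<in>M2. e \<noteq> e' \<longrightarrow> e \<inter> e' = {}" "\<Union>M2 = S2 - X2"
    using X2(3) unfolding perfect_matching_def by auto
  have h1: "X1 \<subseteq> hatV l" using X1(1) S1(1) by blast
  have h2: "X2 \<subseteq> hatV r" using X2(1) S2(1) by blast
  have fin: "finite X1" "finite X2" using finite_subset[OF h1 finite_hatV] finite_subset[OF h2 finite_hatV] by auto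
  have dj: "X1 \<inter> X2 = {}" using X1(1) X2(1) S1(1) S2(1) D by blast
  have cX: "card (X1 \<union> X2) = k1 + k2"
    using card_Un_disjoint[OF fin dj] X1(2) X2(2) by simp
  have sX: "X1 \<union> X2 \<subseteq> (S1 \<union> S2) \<inter> hatTS u" using X1(1) X2(1) TS by blast
  have pm: "perfect_matching (hatE u) ((S1 \<union> S2) - (X1 \<union> X2)) (M1 \<union> M2)"
  proof -
    have a: "M1 \<union> M2 \<subseteq> hatE u" using M1(1) M2(1) E by blast
    have dS1: "S1 \<inter> X2 = {}" using X2(1) S1(1) S2(1) D by blast
    have dS2: "S2 \<inter> X1 = {}" using X1(1) S1(1) S2(1) D by blast
    have eq: "(S1 \<union> S2) - (X1 \<union> X2) = (S1 - X1) \<union> (S2 - X2)" using dS1 dS2 by blast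
    have b: "\<forall>e\<in>M1 \<union> M2. e \<subseteq> (S1 \<union> S2) - (X1 \<union> X2)"
      unfolding eq using M1(2) M2(2) by blast
    have c: "\<Union>(M1 \<union> M2) = (S1 \<union> S2) - (X1 \<union> X2)"
      unfolding eq using M1(4) M2(4) by simp
    have l1: "\<forall>e\<in>M1. e \<subseteq> hatV l" using M1(2) S1(1) by blast
    have l2: "\<forall>e\<in>M2. e \<subseteq> hatV r" using M2(2) S2(1) by blast
    have d: "\<forall>e\<in>M1 \<union> M2. \<forall>e'\<in>M1 \<union> M2. e \<noteq> e' \<longrightarrow> e \<inter> e' = {}"
    proof (intro ballI impI)
      fix e e' assume A: "e \<in> M1 \<union> M2" "e' \<in> M1 \<union> M2" "e \<noteq> e'"
      show "e \<inter> e' = {}"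
      proof (cases "e \<in> M1")
        case True
        show ?thesis
        proof (cases "e' \<in> M1")
          case True2: True
          then show ?thesis using True A(3) M1(3) by blast
        next
          case False
          then have "e' \<in> M2" using A(2) by blast
          then show ?thesis using True l1 l2 D by blast
        qed
      next
        case False
        then have e2: "e \<in> M2" using A(1) by blast
        show ?thesis
        proof (cases "e' \<in> M1")
          case True
          then show ?thesis using e2 l1 l2 D by blast
        next
          case False
          then have "e' \<in> M2" using A(2) by blast
          then show ?thesis using e2 A(3) M2(3) by blast
        qed
      qed
    qed
    show ?thesis using a b c d unfolding perfect_matching_def by blast
  qed
  have sS: "S1 \<union> S2 \<subseteq> hatV u" using S1(1) S2(1) V by auto
  have dom: "hatV u - hatTS u \<subseteq> closed_nbh (hatE u) (S1 \<union> S2)"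
  proof
    fix x assume x: "x \<in> hatV u - hatTS u"
    show "x \<in> closed_nbh (hatE u) (S1 \<union> S2)"
    proof (cases "x \<in> hatV l")
      case True
      then have "x \<in> closed_nbh (hatE l) S1" using x S1 TS by auto
      then show ?thesis using nbh_mono[of "hatE l" "hatE u" S1 "S1 \<union> S2"] E by blast
    next
      case False
      then have "x \<in> closed_nbh (hatE r) S2" using x S2 TS V by auto
      then show ?thesis using nbh_mono[of "hatE r" "hatE u" S2 "S1 \<union> S2"] E by blast
    qed
  qed
  have ex: "\<exists>M. perfect_matching (hatE u) ((S1 \<union> S2) - (X1 \<union> X2)) M" using pm by blast
  have ex2: "\<exists>X. X \<subseteq> (S1 \<union> S2) \<inter> hatTS u \<and> card X = k1 + k2 \<and> (\<exists>M. perfect_matching (hatE u) ((S1 \<union> S2) - X) M)"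
    apply (rule exI[of _ "X1 \<union> X2"]) using sX cX ex by simp
  show ?thesis unfolding k_feasible_def by (rule conjI[OF sS conjI[OF dom ex2]])
qed


lemma pm_union:
  assumes P1: "perfect_matching E1 W1 M1" and P2: "perfect_matching E2 W2 M2"
    and D: "W1 \<inter> W2 = {}" and E: "E1 \<union> E2 \<subseteq> E"
  shows "perfect_matching E (W1 \<union> W2) (M1 \<union> M2)"
proof -
  have M1: "M1 \<subseteq> E1" "\<forall>e\<in>M1. e \<subseteq> W1" "\<forall>e\<in>M1. \<forall>e'\<in>M1. e \<noteq> e' \<longrightarrow> e \<inter> e' = {}" "\<Union>M1 = W1"
    using P1 unfolding perfect_matching_def by auto
  have M2: "M2 \<subseteq> E2" "\<forall>e\<in>M2. e \<subseteq> W2" "\<forall>e\<in>M2. \<forall>e'\<in>M2. e \<noteq> e' \<longrightarrow> e \<inter> e' = {}" "\<Union>M2 = W2"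
    using P2 unfolding perfect_matching_def by auto
  have a: "M1 \<union> M2 \<subseteq> E" using M1(1) M2(1) E by blast
  have b: "\<forall>e\<in>M1 \<union> M2. e \<subseteq> W1 \<union> W2" using M1(2) M2(2) by blast
  have c: "\<Union>(M1 \<union> M2) = W1 \<union> W2" using M1(4) M2(4) by simp
  have d: "\<forall>e\<in>M1 \<union> M2. \<forall>e'\<in>M1 \<union> M2. e \<noteq> e' \<longrightarrow> e \<inter> e' = {}"
  proof (intro ballI impI)
    fix e e' assume A: "e \<in> M1 \<union> M2" "e' \<in> M1 \<union> M2" "e \<noteq> e'"
    show "e \<inter> e' = {}"
    proof (cases "e \<in> M1")
      case True
      show ?thesis
      proof (cases "e' \<in> M1")
        case True2: True
        then show ?thesis using True A(3) M1(3) by blast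
      next
        case False
        then have "e' \<in> M2" using A(2) by blast
        then have "e' \<subseteq> W2" using M2(2) by blast
        moreover have "e \<subseteq> W1" using True M1(2) by blast
        ultimately show ?thesis using D by blast
      qed
    next
      case False
      then have e2: "e \<in> M2" using A(1) by blast
      then have "e \<subseteq> W2" using M2(2) by blast
      show ?thesis
      proof (cases "e' \<in> M1")
        case True
        then have "e' \<subseteq> W1" using M1(2) by blast
        then show ?thesis using \<open>e \<subseteq> W2\<close> D by blast
      next
        case False
        then have "e' \<in> M2" using A(2) by blast
        then show ?thesis using e2 A(3) M2(3) by blast
      qed
    qed
  qed
  show ?thesis unfolding perfect_matching_def using a b c d by blast
qed

lemma pm_single: "{a, b} \<in> E \<Longrightarrow> perfect_matching E {a, b} {{a, b}}"
  unfolding perfect_matching_def by simp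

lemma feasibleI:
  assumes "S \<subseteq> hatV u" "hatV u - hatTS u \<subseteq> closed_nbh (hatE u) S"
    "X \<subseteq> S \<inter> hatTS u" "card X = k" "perfect_matching (hatE u) (S - X) M"
  shows "k_feasible u k S"
proof -
  have ex: "\<exists>M. perfect_matching (hatE u) (S - X) M" using assms(5) by blast
  have ex2: "\<exists>X. X \<subseteq> S \<inter> hatTS u \<and> card X = k \<and> (\<exists>M. perfect_matching (hatE u) (S - X) M)"
    apply (rule exI[of _ X]) using assms(3,4) ex by simp
  show ?thesis unfolding k_feasible_def by (rule conjI[OF assms(1) conjI[OF assms(2) ex2]])
qed

lemma feasibleE:
  assumes "k_feasible u k S"
  obtains X M where "S \<subseteq> hatV u" "hatV u - hatTS u \<subseteq> closed_nbh (hatE u) S"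
    "X \<subseteq> S \<inter> hatTS u" "card X = k" "perfect_matching (hatE u) (S - X) M"
  using assms unfolding k_feasible_def by blast

lemma attach_E: "hatE (Node Attach l r) = hatE l \<union> hatE r \<union> {{u, w} | u w. u \<in> hatTS l \<and> w \<in> hatTS r}"
  by simp

lemma attach_exist:
  assumes D: "hatV l \<inter> hatV r = {}" and F1: "k_feasible l k S1" and F2: "k_feasible r 0 S2"
  shows "\<exists>S. k_feasible (Node Attach l r) k S"
proof -
  let ?u = "Node Attach l r"
  obtain X1 M1 where S1: "S1 \<subseteq> hatV l" "hatV l - hatTS l \<subseteq> closed_nbh (hatE l) S1"
    and X1: "X1 \<subseteq> S1 \<inter> hatTS l" "card X1 = k" "perfect_matching (hatE l) (S1 - X1) M1"
    using feasibleE[OF F1] by metis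
  obtain X2 M2 where S2: "S2 \<subseteq> hatV r" "hatV r - hatTS r \<subseteq> closed_nbh (hatE r) S2"
    and X2: "X2 \<subseteq> S2 \<inter> hatTS r" "card X2 = 0" "perfect_matching (hatE r) (S2 - X2) M2"
    using feasibleE[OF F2] by metis
  have "finite X2" using finite_subset[OF _ finite_hatV[of r]] X2(1) S2(1) by blast
  then have "X2 = {}" using X2(2) by simp
  then have PM2: "perfect_matching (hatE r) S2 M2" using X2(3) by simp
  have El: "hatE l \<subseteq> hatE ?u" and Er: "hatE r \<subseteq> hatE ?u" by auto
  have cross: "{a, b} \<in> hatE ?u" if "a \<in> hatTS l" "b \<in> hatTS r" for a b
    using that by auto
  have TSu: "hatTS ?u = hatTS l" by simp
  have Vu: "hatV ?u = hatV l \<union> hatV r" by simp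
  have dj: "(S1 - X1) \<inter> S2 = {}" using S1(1) S2(1) D by blast
  have PM: "perfect_matching (hatE ?u) ((S1 - X1) \<union> S2) (M1 \<union> M2)"
    by (rule pm_union[OF X1(3) PM2 dj]) (use El Er in blast)
  have domL: "hatV l - hatTS l \<subseteq> closed_nbh (hatE ?u) S" if "S1 \<subseteq> S" for S
    using S1(2) nbh_mono[OF El that] by blast
  have domR: "hatV r - hatTS r \<subseteq> closed_nbh (hatE ?u) S" if "S2 \<subseteq> S" for S
    using S2(2) nbh_mono[OF Er that] by blast
  show ?thesis
  proof (cases "S1 \<inter> hatTS l \<noteq> {} \<or> hatTS r \<subseteq> S2")
    case True
    let ?S = "S1 \<union> S2"
    have "hatTS r \<subseteq> closed_nbh (hatE ?u) ?S"
    proof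
      fix w assume w: "w \<in> hatTS r"
      show "w \<in> closed_nbh (hatE ?u) ?S"
      proof (cases "hatTS r \<subseteq> S2")
        case True
        then show ?thesis using w unfolding closed_nbh_def by blast
      next
        case False
        then obtain a where a: "a \<in> S1" "a \<in> hatTS l" using \<open>S1 \<inter> hatTS l \<noteq> {} \<or> hatTS r \<subseteq> S2\<close> by blast
        have "{a, w} \<in> hatE ?u" using cross[OF a(2) w] .
        then show ?thesis using a(1) unfolding closed_nbh_def by blast
      qed
    qed
    then have dom: "hatV ?u - hatTS ?u \<subseteq> closed_nbh (hatE ?u) ?S"
      using domL[of ?S] domR[of ?S] unfolding Vu TSu by blast
    have eq: "?S - X1 = (S1 - X1) \<union> S2" using dj X1(1) S2(1) S1(1) D by blast
    have "k_feasible ?u k ?S"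
      by (rule feasibleI[OF _ dom _ X1(2)]) (use S1(1) S2(1) X1(1) PM eq in auto)
    then show ?thesis by blast
  next
    case False
    then have n1: "S1 \<inter> hatTS l = {}" and n2: "\<not> hatTS r \<subseteq> S2" by auto
    obtain t where t: "t \<in> hatTS l" using TS_ne[of l] by blast
    obtain s where s: "s \<in> hatTS r" "s \<notin> S2" using n2 by blast
    have tS1: "t \<notin> S1" using n1 t by blast
    have tV: "t \<in> hatV l" using TS_subD[OF t] .
    have sV: "s \<in> hatV r" using TS_subD[OF s(1)] .
    let ?S = "S1 \<union> S2 \<union> {t, s}"
    have PMts: "perfect_matching (hatE ?u) {t, s} {{t, s}}" by (rule pm_single[OF cross[OF t s(1)]])
    have tS2: "t \<notin> S2" using S2(1) tV D by blast
    have sS1: "s \<notin> S1" using S1(1) sV D by blast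
    have dj2: "((S1 - X1) \<union> S2) \<inter> {t, s} = {}" using tS1 s(2) tS2 sS1 by blast
    have PM': "perfect_matching (hatE ?u) (((S1 - X1) \<union> S2) \<union> {t, s}) ((M1 \<union> M2) \<union> {{t, s}})"
      by (rule pm_union[OF PM PMts dj2]) blast
    have "hatTS r \<subseteq> closed_nbh (hatE ?u) ?S"
    proof
      fix w assume w: "w \<in> hatTS r"
      have "{t, w} \<in> hatE ?u" using cross[OF t w] .
      then show "w \<in> closed_nbh (hatE ?u) ?S" unfolding closed_nbh_def by blast
    qed
    then have dom: "hatV ?u - hatTS ?u \<subseteq> closed_nbh (hatE ?u) ?S"
      using domL[of ?S] domR[of ?S] unfolding Vu TSu by blast
    have X1S2: "X1 \<inter> S2 = {}" using X1(1) S1(1) S2(1) D by blast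
    have tX: "t \<notin> X1" and sX: "s \<notin> X1" using X1(1) tS1 sS1 by blast+
    have eq: "?S - X1 = ((S1 - X1) \<union> S2) \<union> {t, s}" using X1S2 tX sX by blast
    have sub: "?S \<subseteq> hatV ?u" using S1(1) S2(1) tV sV unfolding Vu by blast
    have subX: "X1 \<subseteq> ?S \<inter> hatTS ?u" using X1(1) unfolding TSu by blast
    have "k_feasible ?u k ?S"
      by (rule feasibleI[OF sub dom subX X1(2)]) (unfold eq, rule PM')
    then show ?thesis by blast
  qed
qed


lemma leaf_feasible0: "k_feasible (Leaf x) 0 {}"
  by (rule feasibleI[of _ _ "{}" _ "{}"]) (auto simp: pm_empty)

lemma leaf_feasible1: "k_feasible (Leaf x) 1 {x}"
  by (rule feasibleI[of _ _ "{x}" _ "{}"]) (auto simp: pm_empty)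

lemma card_TS_twin:
  assumes "hatV l \<inter> hatV r = {}"
  shows "card (hatTS l \<union> hatTS r) = card (hatTS l) + card (hatTS r)"
proof -
  have "hatTS l \<inter> hatTS r = {}" using assms TS_sub[of l] TS_sub[of r] by blast
  then show ?thesis using card_Un_disjoint[OF finite_TS finite_TS] by blast
qed

lemma twin_exist:
  assumes TS: "hatTS u = hatTS l \<union> hatTS r" and V: "hatV u = hatV l \<union> hatV r"
    and E: "hatE l \<union> hatE r \<subseteq> hatE u" and D: "hatV l \<inter> hatV r = {}"
    and IH1: "\<And>k. k \<le> card (hatTS l) \<Longrightarrow> \<exists>S. k_feasible l k S"
    and IH2: "\<And>k. k \<le> card (hatTS r) \<Longrightarrow> \<exists>S. k_feasible r k S"
    and k: "k \<le> card (hatTS u)"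
  shows "\<exists>S. k_feasible u k S"
proof -
  define k1 where "k1 = min k (card (hatTS l))"
  define k2 where "k2 = k - k1"
  have c: "card (hatTS u) = card (hatTS l) + card (hatTS r)" using card_TS_twin[OF D] TS by simp
  have "k1 \<le> card (hatTS l)" "k2 \<le> card (hatTS r)" "k = k1 + k2" using k c unfolding k1_def k2_def by auto
  then obtain S1 S2 where "k_feasible l k1 S1" "k_feasible r k2 S2" using IH1 IH2 by blast
  then have "k_feasible u (k1 + k2) (S1 \<union> S2)" using twin_combine[OF TS V E D] by blast
  then show ?thesis using \<open>k = k1 + k2\<close> by blast
qed

lemma exists_feasible: "wf_dtree u \<Longrightarrow> k \<le> card (hatTS u) \<Longrightarrow> \<exists>S. k_feasible u k S"
proof (induction u arbitrary: k)
  case (Leaf x)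
  then have "k = 0 \<or> k = 1" by auto
  then show ?case
  proof
    assume "k = 0" then show ?case using leaf_feasible0[of x] by (intro exI[of _ "{}"]) simp
  next
    assume "k = 1" then show ?case using leaf_feasible1[of x] by (intro exI[of _ "{x}"]) simp
  qed
next
  case (Node c l r)
  have wl: "wf_dtree l" and wr: "wf_dtree r" and D: "hatV l \<inter> hatV r = {}" using Node.prems(1) by auto
  have IH1: "\<And>k. k \<le> card (hatTS l) \<Longrightarrow> \<exists>S. k_feasible l k S" using Node.IH(1) wl by blast
  have IH2: "\<And>k. k \<le> card (hatTS r) \<Longrightarrow> \<exists>S. k_feasible r k S" using Node.IH(2) wr by blast
  show ?case
  proof (cases c)
    case TrueTwin
    show ?thesis unfolding TrueTwin
      by (rule twin_exist[OF _ _ _ D IH1 IH2]) (use Node.prems(2) TrueTwin in auto)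
  next
    case FalseTwin
    show ?thesis unfolding FalseTwin
      by (rule twin_exist[OF _ _ _ D IH1 IH2]) (use Node.prems(2) FalseTwin in auto)
  next
    case Attach
    have "k \<le> card (hatTS l)" using Node.prems(2) Attach by simp
    then obtain S1 where "k_feasible l k S1" using IH1 by blast
    moreover obtain S2 where "k_feasible r 0 S2" using IH2 by blast
    ultimately show ?thesis unfolding Attach using attach_exist[OF D] by blast
  qed
qed


lemma attach_upper:
  assumes D: "hatV l \<inter> hatV r = {}" and F1: "k_feasible l j Sl" and F2: "k_feasible r c Sr"
    and cj: "c \<le> j" and j1: "1 \<le> j"
  shows "k_feasible (Node Attach l r) (j - c) (Sl \<union> Sr)"
proof -
  let ?u = "Node Attach l r"
  obtain Z Ml where S1: "Sl \<subseteq> hatV l" "hatV l - hatTS l \<subseteq> closed_nbh (hatE l) Sl"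
    and Z: "Z \<subseteq> Sl \<inter> hatTS l" "card Z = j" "perfect_matching (hatE l) (Sl - Z) Ml"
    using feasibleE[OF F1] by metis
  obtain Yr Mr where S2: "Sr \<subseteq> hatV r" "hatV r - hatTS r \<subseteq> closed_nbh (hatE r) Sr"
    and Yr: "Yr \<subseteq> Sr \<inter> hatTS r" "card Yr = c" "perfect_matching (hatE r) (Sr - Yr) Mr"
    using feasibleE[OF F2] by metis
  have ZV: "Z \<subseteq> hatV l" using Z(1) S1(1) by blast
  have finZ: "finite Z" using finite_subset[OF ZV finite_hatV] .
  have YrV: "Yr \<subseteq> hatV r" using Yr(1) S2(1) by blast
  have finYr: "finite Yr" using finite_subset[OF YrV finite_hatV] .
  obtain Yl where Yl: "Yl \<subseteq> Z" "card Yl = c" "finite Yl"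
    using obtain_subset_with_card_n[of c Z] cj Z(2) by metis
  define X where "X = Z - Yl"
  have cX: "card X = j - c" unfolding X_def using card_Diff_subset[OF Yl(3) Yl(1)] Z(2) Yl(2) by simp
  obtain g where g: "bij_betw g Yl Yr" using finite_same_card_bij[OF Yl(3) finYr] Yl(2) Yr(2) by metis
  have gin: "g y \<in> Yr" if "y \<in> Yl" for y using g that unfolding bij_betw_def by blast
  have ginj: "g y = g y' \<Longrightarrow> y \<in> Yl \<Longrightarrow> y' \<in> Yl \<Longrightarrow> y = y'" for y y'
    using g unfolding bij_betw_def inj_on_def by blast
  have gimg: "g ` Yl = Yr" using g unfolding bij_betw_def by blast
  have El: "hatE l \<subseteq> hatE ?u" and Er: "hatE r \<subseteq> hatE ?u" by auto
  have cross: "{a, b} \<in> hatE ?u" if "a \<in> hatTS l" "b \<in> hatTS r" for a b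
    using that by auto
  have TSu: "hatTS ?u = hatTS l" by simp
  have Vu: "hatV ?u = hatV l \<union> hatV r" by simp
  define C where "C = (\<lambda>y. {y, g y}) ` Yl"
  have YlV: "Yl \<subseteq> hatV l" using Yl(1) ZV by blast
  have PMC: "perfect_matching (hatE ?u) (Yl \<union> Yr) C"
  proof -
    have a: "C \<subseteq> hatE ?u"
    proof
      fix e assume "e \<in> C"
      then obtain y where y: "y \<in> Yl" "e = {y, g y}" unfolding C_def by blast
      have "y \<in> hatTS l" using y(1) Yl(1) Z(1) by blast
      moreover have "g y \<in> hatTS r" using gin[OF y(1)] Yr(1) by blast
      ultimately show "e \<in> hatE ?u" using cross y(2) by blast
    qed
    have b: "\<forall>e\<in>C. e \<subseteq> Yl \<union> Yr" unfolding C_def using gin by blast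
    have c: "\<Union>C = Yl \<union> Yr" unfolding C_def using gimg by blast
    have d: "\<forall>e\<in>C. \<forall>e'\<in>C. e \<noteq> e' \<longrightarrow> e \<inter> e' = {}"
    proof (intro ballI impI)
      fix e e' assume A: "e \<in> C" "e' \<in> C" "e \<noteq> e'"
      obtain y where y: "y \<in> Yl" "e = {y, g y}" using A(1) unfolding C_def by blast
      obtain y' where y': "y' \<in> Yl" "e' = {y', g y'}" using A(2) unfolding C_def by blast
      have ne: "y \<noteq> y'" using A(3) y y' by blast
      have n1: "g y \<noteq> g y'" using ginj y(1) y'(1) ne by blast
      have gyV: "g y \<in> hatV r" "g y' \<in> hatV r" using gin[OF y(1)] gin[OF y'(1)] YrV by blast+
      have yV: "y \<in> hatV l" "y' \<in> hatV l" using y(1) y'(1) YlV by blast+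
      have n2: "y \<noteq> g y'" "g y \<noteq> y'" using gyV yV D by blast+
      show "e \<inter> e' = {}" using y(2) y'(2) ne n1 n2 by blast
    qed
    show ?thesis unfolding perfect_matching_def using a b c d by blast
  qed
  have dj1: "(Sl - Z) \<inter> (Sr - Yr) = {}" using S1(1) S2(1) D by blast
  have PM1: "perfect_matching (hatE ?u) ((Sl - Z) \<union> (Sr - Yr)) (Ml \<union> Mr)"
    by (rule pm_union[OF Z(3) Yr(3) dj1]) (use El Er in blast)
  have dj2: "((Sl - Z) \<union> (Sr - Yr)) \<inter> (Yl \<union> Yr) = {}"
    using Yl(1) YlV YrV S1(1) S2(1) D by blast
  have PM2: "perfect_matching (hatE ?u) (((Sl - Z) \<union> (Sr - Yr)) \<union> (Yl \<union> Yr)) ((Ml \<union> Mr) \<union> C)"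
    by (rule pm_union[OF PM1 PMC dj2]) blast
  have XV: "X \<subseteq> hatV l" unfolding X_def using ZV by blast
  have eq: "(Sl \<union> Sr) - X = ((Sl - Z) \<union> (Sr - Yr)) \<union> (Yl \<union> Yr)"
  proof -
    have "Sr \<inter> X = {}" using XV S2(1) D by blast
    then have e1: "(Sl \<union> Sr) - X = (Sl - X) \<union> Sr" by blast
    have e2: "Sl - X = (Sl - Z) \<union> Yl" unfolding X_def using Yl(1) Z(1) by blast
    have e3: "Sr = (Sr - Yr) \<union> Yr" using Yr(1) by blast
    show ?thesis unfolding e1 e2 using e3 by blast
  qed
  have sub: "Sl \<union> Sr \<subseteq> hatV ?u" unfolding Vu using S1(1) S2(1) by blast
  have subX: "X \<subseteq> (Sl \<union> Sr) \<inter> hatTS ?u" unfolding TSu X_def using Z(1) by blast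
  have "Z \<noteq> {}" using Z(2) j1 by auto
  then obtain z where z: "z \<in> Z" by blast
  have zS: "z \<in> Sl" and zT: "z \<in> hatTS l" using z Z(1) by blast+
  have domT: "hatTS r \<subseteq> closed_nbh (hatE ?u) (Sl \<union> Sr)"
  proof
    fix w assume w: "w \<in> hatTS r"
    have "{z, w} \<in> hatE ?u" using cross[OF zT w] .
    then show "w \<in> closed_nbh (hatE ?u) (Sl \<union> Sr)" using zS unfolding closed_nbh_def by blast
  qed
  have domL: "hatV l - hatTS l \<subseteq> closed_nbh (hatE ?u) (Sl \<union> Sr)"
    using S1(2) nbh_mono[OF El, of Sl "Sl \<union> Sr"] by blast
  have domR: "hatV r - hatTS r \<subseteq> closed_nbh (hatE ?u) (Sl \<union> Sr)"
    using S2(2) nbh_mono[OF Er, of Sr "Sl \<union> Sr"] by blast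
  have dom: "hatV ?u - hatTS ?u \<subseteq> closed_nbh (hatE ?u) (Sl \<union> Sr)"
    unfolding Vu TSu using domT domL domR by blast
  show ?thesis
    by (rule feasibleI[OF sub dom subX cX]) (unfold eq, rule PM2)
qed


lemma attach_edge_cases:
  assumes "e \<in> hatE (Node Attach l r)"
  shows "e \<in> hatE l \<or> e \<in> hatE r \<or> (\<exists>a b. e = {a, b} \<and> a \<in> hatTS l \<and> b \<in> hatTS r)"
  using assms by auto

lemma attach_split:
  assumes D: "hatV l \<inter> hatV r = {}" and F: "k_feasible (Node Attach l r) k S"
  shows "\<exists>c. k_feasible l (k + c) (S \<inter> hatV l) \<and> k_feasible r c (S \<inter> hatV r)"
proof -
  let ?u = "Node Attach l r"
  have TSu: "hatTS ?u = hatTS l" by simp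
  have Vu: "hatV ?u = hatV l \<union> hatV r" by simp
  obtain X M where S: "S \<subseteq> hatV ?u" "hatV ?u - hatTS ?u \<subseteq> closed_nbh (hatE ?u) S"
    and X: "X \<subseteq> S \<inter> hatTS ?u" "card X = k" and PM: "perfect_matching (hatE ?u) (S - X) M"
    using feasibleE[OF F] by metis
  have M: "M \<subseteq> hatE ?u" "\<forall>e\<in>M. e \<subseteq> S - X" "\<forall>e\<in>M. \<forall>e'\<in>M. e \<noteq> e' \<longrightarrow> e \<inter> e' = {}" "\<Union>M = S - X"
    using PM unfolding perfect_matching_def by auto
  have XV: "X \<subseteq> hatV l" using X(1) TS_sub[of l] unfolding TSu by blast
  have XT: "X \<subseteq> hatTS l" using X(1) unfolding TSu by blast
  define Ml where "Ml = {e\<in>M. e \<subseteq> hatV l}"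
  define Mr where "Mr = {e\<in>M. e \<subseteq> hatV r}"
  define C where "C = M - Ml - Mr"
  have ME: "e \<in> hatE ?u" if "e \<in> M" for e using M(1) that by blast
  have Mne: "e \<noteq> {}" if "e \<in> M" for e using E_ne[OF ME[OF that]] .
  have MlE: "e \<in> hatE l" if "e \<in> Ml" for e
  proof -
    have eM: "e \<in> M" and eV: "e \<subseteq> hatV l" using that unfolding Ml_def by auto
    have "e \<in> hatE l \<or> e \<in> hatE r \<or> (\<exists>a b. e = {a, b} \<and> a \<in> hatTS l \<and> b \<in> hatTS r)"
      using attach_edge_cases[OF ME[OF eM]] .
    moreover have "e \<notin> hatE r"
    proof
      assume "e \<in> hatE r"
      then have "e \<subseteq> hatV r" by (rule E_sub)
      then show False using eV D Mne[OF eM] by blast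
    qed
    moreover have "\<not> (\<exists>a b. e = {a, b} \<and> a \<in> hatTS l \<and> b \<in> hatTS r)"
    proof
      assume "\<exists>a b. e = {a, b} \<and> a \<in> hatTS l \<and> b \<in> hatTS r"
      then obtain a b where ab: "e = {a, b}" "b \<in> hatTS r" by blast
      have "b \<in> hatV l" using ab(1) eV by blast
      moreover have "b \<in> hatV r" using TS_subD[OF ab(2)] .
      ultimately show False using D by blast
    qed
    ultimately show ?thesis by blast
  qed
  have MrE: "e \<in> hatE r" if "e \<in> Mr" for e
  proof -
    have eM: "e \<in> M" and eV: "e \<subseteq> hatV r" using that unfolding Mr_def by auto
    have "e \<in> hatE l \<or> e \<in> hatE r \<or> (\<exists>a b. e = {a, b} \<and> a \<in> hatTS l \<and> b \<in> hatTS r)"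
      using attach_edge_cases[OF ME[OF eM]] .
    moreover have "e \<notin> hatE l"
    proof
      assume "e \<in> hatE l"
      then have "e \<subseteq> hatV l" by (rule E_sub)
      then show False using eV D Mne[OF eM] by blast
    qed
    moreover have "\<not> (\<exists>a b. e = {a, b} \<and> a \<in> hatTS l \<and> b \<in> hatTS r)"
    proof
      assume "\<exists>a b. e = {a, b} \<and> a \<in> hatTS l \<and> b \<in> hatTS r"
      then obtain a b where ab: "e = {a, b}" "a \<in> hatTS l" by blast
      have "a \<in> hatV r" using ab(1) eV by blast
      moreover have "a \<in> hatV l" using TS_subD[OF ab(2)] .
      ultimately show False using D by blast
    qed
    ultimately show ?thesis by blast
  qed
  have Cform: "\<exists>a b. e = {a, b} \<and> a \<in> hatTS l \<and> b \<in> hatTS r" if "e \<in> C" for e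
  proof -
    have eM: "e \<in> M" and n1: "\<not> e \<subseteq> hatV l" and n2: "\<not> e \<subseteq> hatV r"
      using that unfolding C_def Ml_def Mr_def by auto
    have "e \<in> hatE l \<or> e \<in> hatE r \<or> (\<exists>a b. e = {a, b} \<and> a \<in> hatTS l \<and> b \<in> hatTS r)"
      using attach_edge_cases[OF ME[OF eM]] .
    moreover have "e \<notin> hatE l" using n1 E_sub[of e l] by blast
    moreover have "e \<notin> hatE r" using n2 E_sub[of e r] by blast
    ultimately show ?thesis by blast
  qed
  define Yl where "Yl = \<Union>C \<inter> hatV l"
  define Yr where "Yr = \<Union>C \<inter> hatV r"
  have CYl: "e \<inter> hatV l \<subseteq> Yl" "e \<inter> hatV r \<subseteq> Yr" if "e \<in> C" for e
    using that unfolding Yl_def Yr_def by blast+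
  have YlT: "Yl \<subseteq> hatTS l"
  proof
    fix y assume "y \<in> Yl"
    then obtain e where e: "e \<in> C" "y \<in> e" "y \<in> hatV l" unfolding Yl_def by blast
    obtain a b where ab: "e = {a, b}" "a \<in> hatTS l" "b \<in> hatTS r" using Cform[OF e(1)] by blast
    have "b \<in> hatV r" using TS_subD[OF ab(3)] .
    then have "y \<noteq> b" using e(3) D by blast
    then show "y \<in> hatTS l" using ab e(2) by blast
  qed
  have YrT: "Yr \<subseteq> hatTS r"
  proof
    fix y assume "y \<in> Yr"
    then obtain e where e: "e \<in> C" "y \<in> e" "y \<in> hatV r" unfolding Yr_def by blast
    obtain a b where ab: "e = {a, b}" "a \<in> hatTS l" "b \<in> hatTS r" using Cform[OF e(1)] by blast
    have "a \<in> hatV l" using TS_subD[OF ab(2)] .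
    then have "y \<noteq> a" using e(3) D by blast
    then show "y \<in> hatTS r" using ab e(2) by blast
  qed
  have CM: "C \<subseteq> M" unfolding C_def by blast
  have UC: "\<Union>C \<subseteq> S - X" using CM M(2) by blast
  have cardYl: "card Yl = card C"
  proof -
    have inj: "inj_on (\<lambda>e. e \<inter> hatV l) C"
    proof (rule inj_onI)
      fix e e' assume A: "e \<in> C" "e' \<in> C" "e \<inter> hatV l = e' \<inter> hatV l"
      obtain a b where ab: "e = {a, b}" "a \<in> hatTS l" using Cform[OF A(1)] by blast
      have "a \<in> e \<inter> hatV l" using ab(1) TS_subD[OF ab(2)] by blast
      then have "a \<in> e \<inter> e'" using A(3) by blast
      then show "e = e'" using M(3) CM A(1,2) by blast
    qed
    have img: "(\<lambda>e. e \<inter> hatV l) ` C = (\<lambda>y. {y}) ` Yl"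
    proof (intro equalityI subsetI)
      fix s assume "s \<in> (\<lambda>e. e \<inter> hatV l) ` C"
      then obtain e where e: "e \<in> C" "s = e \<inter> hatV l" by blast
      obtain a b where ab: "e = {a, b}" "a \<in> hatTS l" "b \<in> hatTS r" using Cform[OF e(1)] by blast
      have aV: "a \<in> hatV l" using TS_subD[OF ab(2)] .
      have bV: "b \<notin> hatV l" using TS_subD[OF ab(3)] D by blast
      have "s = {a}" using e(2) ab(1) aV bV by blast
      moreover have "a \<in> Yl" using CYl(1)[OF e(1)] ab(1) aV by blast
      ultimately show "s \<in> (\<lambda>y. {y}) ` Yl" by blast
    next
      fix s assume "s \<in> (\<lambda>y. {y}) ` Yl"
      then obtain y where y: "y \<in> Yl" "s = {y}" by blast
      then obtain e where e: "e \<in> C" "y \<in> e" "y \<in> hatV l" unfolding Yl_def by blast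
      obtain a b where ab: "e = {a, b}" "a \<in> hatTS l" "b \<in> hatTS r" using Cform[OF e(1)] by blast
      have bV: "b \<notin> hatV l" using TS_subD[OF ab(3)] D by blast
      have "e \<inter> hatV l = {y}" using ab(1) e(2,3) bV by blast
      then show "s \<in> (\<lambda>e. e \<inter> hatV l) ` C" using e(1) y(2) by blast
    qed
    have "card C = card ((\<lambda>e. e \<inter> hatV l) ` C)" using card_image[OF inj] by simp
    also have "\<dots> = card ((\<lambda>y. {y}) ` Yl)" using img by simp
    also have "\<dots> = card Yl" by (rule card_image) (auto simp: inj_on_def)
    finally show ?thesis by simp
  qed
  have cardYr: "card Yr = card C"
  proof -
    have inj: "inj_on (\<lambda>e. e \<inter> hatV r) C"
    proof (rule inj_onI)
      fix e e' assume A: "e \<in> C" "e' \<in> C" "e \<inter> hatV r = e' \<inter> hatV r"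
      obtain a b where ab: "e = {a, b}" "b \<in> hatTS r" using Cform[OF A(1)] by blast
      have "b \<in> e \<inter> hatV r" using ab(1) TS_subD[OF ab(2)] by blast
      then have "b \<in> e \<inter> e'" using A(3) by blast
      then show "e = e'" using M(3) CM A(1,2) by blast
    qed
    have img: "(\<lambda>e. e \<inter> hatV r) ` C = (\<lambda>y. {y}) ` Yr"
    proof (intro equalityI subsetI)
      fix s assume "s \<in> (\<lambda>e. e \<inter> hatV r) ` C"
      then obtain e where e: "e \<in> C" "s = e \<inter> hatV r" by blast
      obtain a b where ab: "e = {a, b}" "a \<in> hatTS l" "b \<in> hatTS r" using Cform[OF e(1)] by blast
      have bV: "b \<in> hatV r" using TS_subD[OF ab(3)] .
      have aV: "a \<notin> hatV r" using TS_subD[OF ab(2)] D by blast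
      have "s = {b}" using e(2) ab(1) aV bV by blast
      moreover have "b \<in> Yr" using CYl(2)[OF e(1)] ab(1) bV by blast
      ultimately show "s \<in> (\<lambda>y. {y}) ` Yr" by blast
    next
      fix s assume "s \<in> (\<lambda>y. {y}) ` Yr"
      then obtain y where y: "y \<in> Yr" "s = {y}" by blast
      then obtain e where e: "e \<in> C" "y \<in> e" "y \<in> hatV r" unfolding Yr_def by blast
      obtain a b where ab: "e = {a, b}" "a \<in> hatTS l" "b \<in> hatTS r" using Cform[OF e(1)] by blast
      have aV: "a \<notin> hatV r" using TS_subD[OF ab(2)] D by blast
      have "e \<inter> hatV r = {y}" using ab(1) e(2,3) aV by blast
      then show "s \<in> (\<lambda>e. e \<inter> hatV r) ` C" using e(1) y(2) by blast
    qed
    have "card C = card ((\<lambda>e. e \<inter> hatV r) ` C)" using card_image[OF inj] by simp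
    also have "\<dots> = card ((\<lambda>y. {y}) ` Yr)" using img by simp
    also have "\<dots> = card Yr" by (rule card_image) (auto simp: inj_on_def)
    finally show ?thesis by simp
  qed
  define c where "c = card C"
  have ex_edge: "\<exists>e\<in>M. x \<in> e" if "x \<in> S - X" for x using that M(4) by blast
  have FL: "k_feasible l (k + c) (S \<inter> hatV l)"
  proof -
    have sub: "S \<inter> hatV l \<subseteq> hatV l" by blast
    have YlS: "Yl \<subseteq> S - X" unfolding Yl_def using UC by blast
    have XYl: "X \<union> Yl \<subseteq> (S \<inter> hatV l) \<inter> hatTS l" using X(1) XV XT YlS YlT TS_sub[of l] unfolding TSu by blast
    have djXY: "X \<inter> Yl = {}" using YlS by blast
    have finX: "finite X" using finite_subset[OF XV finite_hatV] .
    have finYl: "finite Yl" using finite_subset[OF _ finite_hatV[of l]] unfolding Yl_def by blast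
    have cXY: "card (X \<union> Yl) = k + c" using card_Un_disjoint[OF finX finYl djXY] X(2) cardYl c_def by simp
    have pm: "perfect_matching (hatE l) ((S \<inter> hatV l) - (X \<union> Yl)) Ml"
    proof -
      have a: "Ml \<subseteq> hatE l" using MlE by blast
      have b: "\<forall>e\<in>Ml. e \<subseteq> (S \<inter> hatV l) - (X \<union> Yl)"
      proof
        fix e assume e: "e \<in> Ml"
        have eM: "e \<in> M" and eV: "e \<subseteq> hatV l" using e unfolding Ml_def by auto
        have "e \<inter> Yl = {}"
        proof (rule ccontr)
          assume "e \<inter> Yl \<noteq> {}"
          then obtain y e' where y: "y \<in> e" "e' \<in> C" "y \<in> e'" unfolding Yl_def by blast
          have "e' \<noteq> e" using y(2) e unfolding C_def by blast
          then show False using M(3) eM CM y by blast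
        qed
        then show "e \<subseteq> (S \<inter> hatV l) - (X \<union> Yl)" using M(2) eM eV by blast
      qed
      have c: "\<Union>Ml = (S \<inter> hatV l) - (X \<union> Yl)"
      proof (intro equalityI subsetI)
        fix x assume "x \<in> \<Union>Ml" then show "x \<in> (S \<inter> hatV l) - (X \<union> Yl)" using b by blast
      next
        fix x assume x: "x \<in> (S \<inter> hatV l) - (X \<union> Yl)"
        then obtain e where e: "e \<in> M" "x \<in> e" using ex_edge by blast
        have "e \<notin> Mr"
        proof
          assume "e \<in> Mr" then have "e \<subseteq> hatV r" unfolding Mr_def by blast
          then show False using x e(2) D by blast
        qed
        moreover have "e \<notin> C"
        proof
          assume "e \<in> C" then have "x \<in> Yl" using x e(2) unfolding Yl_def by blast
          then show False using x by blast
        qed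
        ultimately have "e \<in> Ml" using e(1) unfolding C_def by blast
        then show "x \<in> \<Union>Ml" using e(2) by blast
      qed
      have d: "\<forall>e\<in>Ml. \<forall>e'\<in>Ml. e \<noteq> e' \<longrightarrow> e \<inter> e' = {}" using M(3) unfolding Ml_def by blast
      show ?thesis unfolding perfect_matching_def using a b c d by blast
    qed
    have dom: "hatV l - hatTS l \<subseteq> closed_nbh (hatE l) (S \<inter> hatV l)"
    proof
      fix x assume x: "x \<in> hatV l - hatTS l"
      then have "x \<in> hatV ?u - hatTS ?u" unfolding Vu TSu by blast
      then have "x \<in> closed_nbh (hatE ?u) S" using S(2) by blast
      then have "x \<in> S \<or> (\<exists>w\<in>S. {w, x} \<in> hatE ?u)" unfolding closed_nbh_def by blast
      then show "x \<in> closed_nbh (hatE l) (S \<inter> hatV l)"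
      proof
        assume "x \<in> S" then show ?thesis using x unfolding closed_nbh_def by blast
      next
        assume "\<exists>w\<in>S. {w, x} \<in> hatE ?u"
        then obtain w where w: "w \<in> S" "{w, x} \<in> hatE ?u" by blast
        have "{w, x} \<in> hatE l \<or> {w, x} \<in> hatE r \<or> (\<exists>a b. {w, x} = {a, b} \<and> a \<in> hatTS l \<and> b \<in> hatTS r)"
          using attach_edge_cases[OF w(2)] .
        moreover have "{w, x} \<notin> hatE r"
        proof
          assume "{w, x} \<in> hatE r" then have "x \<in> hatV r" using E_sub by blast
          then show False using x D by blast
        qed
        moreover have "\<not> (\<exists>a b. {w, x} = {a, b} \<and> a \<in> hatTS l \<and> b \<in> hatTS r)"
        proof
          assume "\<exists>a b. {w, x} = {a, b} \<and> a \<in> hatTS l \<and> b \<in> hatTS r"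
          then obtain a b where ab: "{w, x} = {a, b}" "a \<in> hatTS l" "b \<in> hatTS r" by blast
          have "b \<in> hatV r" using TS_subD[OF ab(3)] .
          then have "x \<noteq> b" using x D by blast
          then have "x = a" using ab(1) by (metis doubleton_eq_iff)
          then show False using x ab(2) by blast
        qed
        ultimately have E: "{w, x} \<in> hatE l" by blast
        then have "w \<in> hatV l" using E_sub by blast
        then show ?thesis using E w(1) unfolding closed_nbh_def by blast
      qed
    qed
    show ?thesis by (rule feasibleI[OF sub dom XYl cXY pm])
  qed
  have FR: "k_feasible r c (S \<inter> hatV r)"
  proof -
    have sub: "S \<inter> hatV r \<subseteq> hatV r" by blast
    have YrS: "Yr \<subseteq> S - X" unfolding Yr_def using UC by blast
    have Yrsub: "Yr \<subseteq> (S \<inter> hatV r) \<inter> hatTS r" using YrS YrT TS_sub[of r] by blast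
    have cY: "card Yr = c" using cardYr c_def by simp
    have XSr: "X \<inter> hatV r = {}" using XV D by blast
    have pm: "perfect_matching (hatE r) ((S \<inter> hatV r) - Yr) Mr"
    proof -
      have a: "Mr \<subseteq> hatE r" using MrE by blast
      have b: "\<forall>e\<in>Mr. e \<subseteq> (S \<inter> hatV r) - Yr"
      proof
        fix e assume e: "e \<in> Mr"
        have eM: "e \<in> M" and eV: "e \<subseteq> hatV r" using e unfolding Mr_def by auto
        have "e \<inter> Yr = {}"
        proof (rule ccontr)
          assume "e \<inter> Yr \<noteq> {}"
          then obtain y e' where y: "y \<in> e" "e' \<in> C" "y \<in> e'" unfolding Yr_def by blast
          have "e' \<noteq> e" using y(2) e unfolding C_def by blast
          then show False using M(3) eM CM y by blast
        qed
        then show "e \<subseteq> (S \<inter> hatV r) - Yr" using M(2) eM eV by blast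
      qed
      have c: "\<Union>Mr = (S \<inter> hatV r) - Yr"
      proof (intro equalityI subsetI)
        fix x assume "x \<in> \<Union>Mr" then show "x \<in> (S \<inter> hatV r) - Yr" using b by blast
      next
        fix x assume x: "x \<in> (S \<inter> hatV r) - Yr"
        then have "x \<notin> X" using XSr by blast
        then obtain e where e: "e \<in> M" "x \<in> e" using ex_edge x by blast
        have "e \<notin> Ml"
        proof
          assume "e \<in> Ml" then have "e \<subseteq> hatV l" unfolding Ml_def by blast
          then show False using x e(2) D by blast
        qed
        moreover have "e \<notin> C"
        proof
          assume "e \<in> C" then have "x \<in> Yr" using x e(2) unfolding Yr_def by blast
          then show False using x by blast
        qed
        ultimately have "e \<in> Mr" using e(1) unfolding C_def by blast
        then show "x \<in> \<Union>Mr" using e(2) by blast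
      qed
      have d: "\<forall>e\<in>Mr. \<forall>e'\<in>Mr. e \<noteq> e' \<longrightarrow> e \<inter> e' = {}" using M(3) unfolding Mr_def by blast
      show ?thesis unfolding perfect_matching_def using a b c d by blast
    qed
    have dom: "hatV r - hatTS r \<subseteq> closed_nbh (hatE r) (S \<inter> hatV r)"
    proof
      fix x assume x: "x \<in> hatV r - hatTS r"
      have xl: "x \<notin> hatV l" using x D by blast
      then have "x \<in> hatV ?u - hatTS ?u" using x TS_sub[of l] unfolding Vu TSu by blast
      then have "x \<in> closed_nbh (hatE ?u) S" using S(2) by blast
      then have "x \<in> S \<or> (\<exists>w\<in>S. {w, x} \<in> hatE ?u)" unfolding closed_nbh_def by blast
      then show "x \<in> closed_nbh (hatE r) (S \<inter> hatV r)"
      proof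
        assume "x \<in> S" then show ?thesis using x unfolding closed_nbh_def by blast
      next
        assume "\<exists>w\<in>S. {w, x} \<in> hatE ?u"
        then obtain w where w: "w \<in> S" "{w, x} \<in> hatE ?u" by blast
        have "{w, x} \<in> hatE l \<or> {w, x} \<in> hatE r \<or> (\<exists>a b. {w, x} = {a, b} \<and> a \<in> hatTS l \<and> b \<in> hatTS r)"
          using attach_edge_cases[OF w(2)] .
        moreover have "{w, x} \<notin> hatE l"
        proof
          assume "{w, x} \<in> hatE l" then have "x \<in> hatV l" using E_sub by blast
          then show False using xl by blast
        qed
        moreover have "\<not> (\<exists>a b. {w, x} = {a, b} \<and> a \<in> hatTS l \<and> b \<in> hatTS r)"
        proof
          assume "\<exists>a b. {w, x} = {a, b} \<and> a \<in> hatTS l \<and> b \<in> hatTS r"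
          then obtain a b where ab: "{w, x} = {a, b}" "a \<in> hatTS l" "b \<in> hatTS r" by blast
          have "a \<in> hatV l" using TS_subD[OF ab(2)] .
          then have "x \<noteq> a" using xl by blast
          then have "x = b" using ab(1) by (metis doubleton_eq_iff)
          then show False using x ab(3) by blast
        qed
        ultimately have E: "{w, x} \<in> hatE r" by blast
        then have "w \<in> hatV r" using E_sub by blast
        then show ?thesis using E w(1) unfolding closed_nbh_def by blast
      qed
    qed
    show ?thesis by (rule feasibleI[OF sub dom Yrsub cY pm])
  qed
  show ?thesis using FL FR by blast
qed


lemma gamma_le: "k_feasible u k S \<Longrightarrow> gamma_hat u k \<le> card S"
  unfolding gamma_hat_def by (rule Least_le) blast

lemma gamma_ex:
  assumes "wf_dtree u" "k \<le> card (hatTS u)"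
  shows "\<exists>S. k_feasible u k S \<and> card S = gamma_hat u k"
proof -
  obtain S where "k_feasible u k S" using exists_feasible[OF assms] by blast
  then have "\<exists>n S. k_feasible u k S \<and> card S = n" by blast
  then show ?thesis unfolding gamma_hat_def by (rule LeastI_ex)
qed

lemma gset_eq: "{gamma_hat u k | k. k \<le> card (hatTS u)} = gamma_hat u ` {..card (hatTS u)}"
  by auto

lemma min_le: "k \<le> card (hatTS u) \<Longrightarrow> min_hat u \<le> gamma_hat u k"
  unfolding min_hat_def gset_eq by (rule Min_le) auto

lemma min_in: "\<exists>k \<le> card (hatTS u). gamma_hat u k = min_hat u"
proof -
  have "min_hat u \<in> gamma_hat u ` {..card (hatTS u)}"
    unfolding min_hat_def gset_eq by (rule Min_in) auto
  then show ?thesis by force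
qed

lemma kset_props: "finite {k. k \<le> card (hatTS u) \<and> gamma_hat u k = min_hat u}"
    "{k. k \<le> card (hatTS u) \<and> gamma_hat u k = min_hat u} \<noteq> {}"
  using min_in[of u] by auto

lemma alpha_props: "alpha_hat u \<le> card (hatTS u) \<and> gamma_hat u (alpha_hat u) = min_hat u"
proof -
  have "alpha_hat u \<in> {k. k \<le> card (hatTS u) \<and> gamma_hat u k = min_hat u}"
    unfolding alpha_hat_def by (rule Min_in[OF kset_props])
  then show ?thesis by simp
qed

lemma beta_props: "beta_hat u \<le> card (hatTS u) \<and> gamma_hat u (beta_hat u) = min_hat u"
proof -
  have "beta_hat u \<in> {k. k \<le> card (hatTS u) \<and> gamma_hat u k = min_hat u}"
    unfolding beta_hat_def by (rule Max_in[OF kset_props])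
  then show ?thesis by simp
qed

theorem lemma29:
  fixes V :: "'a set" and E :: "'a set set" and T vl vr :: "'a dtree"
  assumes "distance_hereditary V E"
    and "decomposition_tree T V E"
    and "Node Attach vl vr \<in> subtrees T"
    and "property_P vl" and "property_P vr"
    and "alpha_hat vr \<le> beta_hat vl"
    and "\<not> (alpha_hat vl = 0 \<and> beta_hat vr = 0)"
    and "\<not> (alpha_hat vr = 0 \<and> beta_hat vl = 0)"
  shows "min_hat (Node Attach vl vr) = min_hat vl + min_hat vr"
proof -
  let ?u = "Node Attach vl vr"
  have wfT: "wf_dtree T" using assms(2) unfolding decomposition_tree_def by blast
  have wfu: "wf_dtree ?u" using wf_subtrees[OF assms(3) wfT] .
  have wl: "wf_dtree vl" and wr: "wf_dtree vr" and D: "hatV vl \<inter> hatV vr = {}" using wfu by auto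
  have VD: "\<And>A B. A \<subseteq> hatV vl \<Longrightarrow> B \<subseteq> hatV vr \<Longrightarrow> card (A \<union> B) = card A + card B"
  proof -
    fix A B assume A: "A \<subseteq> hatV vl" and B: "B \<subseteq> hatV vr"
    have "finite A" using finite_subset[OF A finite_hatV] .
    moreover have "finite B" using finite_subset[OF B finite_hatV] .
    moreover have "A \<inter> B = {}" using A B D by blast
    ultimately show "card (A \<union> B) = card A + card B" by (rule card_Un_disjoint)
  qed
  have upper: "min_hat ?u \<le> min_hat vl + min_hat vr"
  proof -
    have b1: "1 \<le> beta_hat vl" using assms(6) assms(8) by auto
    obtain Sl where Sl: "k_feasible vl (beta_hat vl) Sl" "card Sl = min_hat vl"
      using gamma_ex[OF wl] beta_props[of vl] by metis
    obtain Sr where Sr: "k_feasible vr (alpha_hat vr) Sr" "card Sr = min_hat vr"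
      using gamma_ex[OF wr] alpha_props[of vr] by metis
    have F: "k_feasible ?u (beta_hat vl - alpha_hat vr) (Sl \<union> Sr)"
      by (rule attach_upper[OF D Sl(1) Sr(1) assms(6) b1])
    have "Sl \<subseteq> hatV vl" "Sr \<subseteq> hatV vr" using Sl(1) Sr(1) unfolding k_feasible_def by blast+
    then have cS: "card (Sl \<union> Sr) = min_hat vl + min_hat vr" using VD Sl(2) Sr(2) by simp
    have "min_hat ?u \<le> gamma_hat ?u (beta_hat vl - alpha_hat vr)"
      by (rule min_le[OF feasible_le[OF F]])
    also have "\<dots> \<le> card (Sl \<union> Sr)" by (rule gamma_le[OF F])
    finally show ?thesis using cS by simp
  qed
  have lower: "min_hat vl + min_hat vr \<le> min_hat ?u"
  proof -
    obtain k0 where k0: "k0 \<le> card (hatTS ?u)" "gamma_hat ?u k0 = min_hat ?u" using min_in by blast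
    obtain S where S: "k_feasible ?u k0 S" "card S = gamma_hat ?u k0" using gamma_ex[OF wfu k0(1)] by blast
    obtain c where c: "k_feasible vl (k0 + c) (S \<inter> hatV vl)" "k_feasible vr c (S \<inter> hatV vr)"
      using attach_split[OF D S(1)] by blast
    have "S \<subseteq> hatV vl \<union> hatV vr" using S(1) unfolding k_feasible_def by simp
    then have SS: "S = (S \<inter> hatV vl) \<union> (S \<inter> hatV vr)" by blast
    have cS: "card S = card (S \<inter> hatV vl) + card (S \<inter> hatV vr)"
      by (subst SS, rule VD) blast+
    have "min_hat vl \<le> card (S \<inter> hatV vl)"
      using min_le[OF feasible_le[OF c(1)]] gamma_le[OF c(1)] by linarith
    moreover have "min_hat vr \<le> card (S \<inter> hatV vr)"
      using min_le[OF feasible_le[OF c(2)]] gamma_le[OF c(2)] by linarith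
    ultimately show ?thesis using cS S(2) k0(2) by linarith
  qed
  show ?thesis using upper lower by linarith
qed

end
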